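(* Let $\mathcal{X}\subset\mathbb{R}^p$ be open and contractible, let $f,\phi\in C^3(\mathcal{X})$ with $\phi$ of Legendre type. Assume: (A3) there is $m\ge0$ with $m\|\nabla\phi(\mathbf{x})-\nabla\phi(\mathbf{x}')\|_2^2\le\langle\nabla f(\mathbf{x})-\nabla f(\mathbf{x}'),\nabla\phi(\mathbf{x})-\nabla\phi(\mathbf{x}')\rangle$ for all $\mathbf{x},\mathbf{x}'\in\mathcal{X}$; (A4) there is $M>0$ with $\|\nabla f(\mathbf{x})-\nabla f(\mathbf{x}')\|_2\le M\|\nabla\phi(\mathbf{x})-\nabla\phi(\mathbf{x}')\|_2$ for all $\mathbf{x},\mathbf{x}'\in\mathcal{X}$; (A5) there is $\delta\ge0$ with $\|[(D^2\phi(\mathbf{x}))^{-1},D^2f(\mathbf{x})]\|_2\le\delta$ for all $\mathbf{x}\in\mathcal{X}$. Then for all $\mathbf{x}_1,\mathbf{x}_2\in\mathcal{X}$, $$\langle\nabla f(\mathbf{x}_1)-\nabla f(\mathbf{x}_2),\nabla\phi(\mathbf{x}_1)-\nabla\phi(\mathbf{x}_2)\rangle\ge A\|\nabla f(\mathbf{x}_1)-\nabla f(\mathbf{x}_2)\|_2^2+B\|\nabla\phi(\mathbf{x}_1)-\nabla\phi(\mathbf{x}_2)\|_2^2,$$ with $A:=\frac{1}{m+M}$ and $B:=\frac{4mM-4M\delta-\delta^2}{4(m+M)}$.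
   Context: A Legendre-type function is in the sense of Rockafellar (Convex Analysis, Ch. 26); $\nabla\phi$ is a bijection from $\mathcal{X}$ onto $\mathrm{int\,dom}\,\phi^*$ with inverse $\nabla\phi^*$. $\|\cdot\|_2$ is the Euclidean norm for vectors and spectral norm for matrices; $[\mathbf{M}_1,\mathbf{M}_2]=\mathbf{M}_1\mathbf{M}_2-\mathbf{M}_2\mathbf{M}_1$. *)

theory Defs
  imports "HOL-Analysis.Analysis"
begin

definition grad :: "(real^'n \<Rightarrow> real) \<Rightarrow> real^'n \<Rightarrow> real^'n" where
  "grad f x = (\<chi> i. frechet_derivative f (at x) (axis i 1))"

definition hessian :: "(real^'n \<Rightarrow> real) \<Rightarrow> real^'n \<Rightarrow> real^'n^'n" where
  "hessian f x = matrix (frechet_derivative (grad f) (at x))"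

definition C3_on :: "(real^'n) set \<Rightarrow> (real^'n \<Rightarrow> real) \<Rightarrow> bool" where
  "C3_on X f \<longleftrightarrow>
     (\<forall>x\<in>X. f differentiable (at x)) \<and>
     (\<forall>x\<in>X. grad f differentiable (at x)) \<and>
     (\<forall>x\<in>X. hessian f differentiable (at x)) \<and>
     (\<forall>i. continuous_on X (\<lambda>x. frechet_derivative (hessian f) (at x) (axis i 1)))"

definition strictly_convex_on :: "'a::real_vector set \<Rightarrow> ('a \<Rightarrow> real) \<Rightarrow> bool" where
  "strictly_convex_on S g \<longleftrightarrow>
     (\<forall>x\<in>S. \<forall>y\<in>S. \<forall>t::real. x \<noteq> y \<and> 0 < t \<and> t < 1 \<longrightarrow>
        g ((1 - t) *\<^sub>R x + t *\<^sub>R y) < (1 - t) * g x + t * g y)"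

text \<open>Legendre type (Rockafellar, Ch. 26) for a function with int dom = X:
  convex, essentially smooth (differentiable on the nonempty open convex set X,
  gradient norm blowing up at boundary points) and essentially strictly convex
  (strictly convex on dom of the subdifferential, which is X).\<close>
definition legendre_type :: "(real^'n) set \<Rightarrow> (real^'n \<Rightarrow> real) \<Rightarrow> bool" where
  "legendre_type X \<phi> \<longleftrightarrow>
     X \<noteq> {} \<and> open X \<and> convex X \<and> convex_on X \<phi> \<and> strictly_convex_on X \<phi> \<and>
     (\<forall>x\<in>X. \<phi> differentiable (at x)) \<and>
     (\<forall>s z. (\<forall>k. s k \<in> X) \<and> s \<longlonglongrightarrow> z \<and> z \<in> frontier X \<longrightarrow>
        filterlim (\<lambda>k. norm (grad \<phi> (s k))) at_top sequentially)"

definition spec_norm :: "real^'n^'m \<Rightarrow> real" where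
  "spec_norm A = onorm (\<lambda>v. A *v v)"

definition commutator :: "real^'n^'n \<Rightarrow> real^'n^'n \<Rightarrow> real^'n^'n" where
  "commutator A B = A ** B - B ** A"

end

theory Submission
  imports Defs
begin
lemma grad_deriv:
  fixes f :: "real^'n \<Rightarrow> real"
  assumes "f differentiable (at x)"
  shows "(f has_derivative (\<lambda>h. grad f x \<bullet> h)) (at x)"
proof -
  let ?D = "frechet_derivative f (at x)"
  have D: "(f has_derivative ?D) (at x)" using assms frechet_derivative_works by blast
  have lin: "linear ?D" using has_derivative_linear[OF D] .
  have "?D h = grad f x \<bullet> h" for h
  proof -
    have "?D h = ?D (\<Sum>i\<in>UNIV. (h$i) *\<^sub>R axis i 1)"
      using basis_expansion[of h] by (simp add: scalar_mult_eq_scaleR)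
    also have "\<dots> = (\<Sum>i\<in>UNIV. (h$i) * ?D (axis i 1))"
      using lin by (simp add: linear_sum linear_scale)
    also have "\<dots> = grad f x \<bullet> h"
      by (simp add: grad_def inner_vec_def mult.commute)
    finally show ?thesis .
  qed
  then have "?D = (\<lambda>h. grad f x \<bullet> h)" by auto
  then show ?thesis using D by simp
qed

lemma hess_deriv:
  fixes f :: "real^'n \<Rightarrow> real"
  assumes "grad f differentiable (at x)"
  shows "(grad f has_derivative (\<lambda>h. hessian f x *v h)) (at x)"
proof -
  let ?D = "frechet_derivative (grad f) (at x)"
  have D: "(grad f has_derivative ?D) (at x)" using assms frechet_derivative_works by blast
  have lin: "linear ?D" using has_derivative_linear[OF D] .
  have "hessian f x *v h = ?D h" for h
    unfolding hessian_def by (rule matrix_works) (use lin in \<open>simp add: linear_matrix_vector_mul_eq\<close>)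
  then show ?thesis using D by presburger
qed

lemma line_deriv:
  fixes f :: "'a::real_inner \<Rightarrow> real"
  assumes "(f has_derivative (\<lambda>h. g \<bullet> h)) (at (a + t *\<^sub>R b))"
  shows "((\<lambda>t. f (a + t *\<^sub>R b)) has_real_derivative (g \<bullet> b)) (at t)"
proof -
  have "((\<lambda>t. a + t *\<^sub>R b) has_derivative (\<lambda>h. h *\<^sub>R b)) (at t)"
    by (auto intro!: derivative_eq_intros)
  from has_derivative_compose[OF this assms]
  have "((\<lambda>t. f (a + t *\<^sub>R b)) has_derivative (\<lambda>h. g \<bullet> (h *\<^sub>R b))) (at t)" .
  moreover have "(\<lambda>h. g \<bullet> (h *\<^sub>R b)) = (*) (g \<bullet> b)" by (auto simp: fun_eq_iff)
  ultimately show ?thesis by (simp add: has_field_derivative_def)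
qed

lemma schwarz_aux:
  fixes f :: "real^'n \<Rightarrow> real"
  assumes X: "open X" "x \<in> X" and df: "\<And>z. z \<in> X \<Longrightarrow> f differentiable (at z)"
    and dg: "grad f differentiable (at x)" and e: "e > 0"
  shows "\<exists>d>0. \<forall>s. 0 < s \<and> s < d \<longrightarrow>
     \<bar>(f (x + s *\<^sub>R v + s *\<^sub>R w) - f (x + s *\<^sub>R v) - f (x + s *\<^sub>R w) + f x)
        - s^2 * ((hessian f x *v w) \<bullet> v)\<bar> \<le> e * s^2 * ((2 * norm v + norm w) * norm v)"
proof -
  let ?H = "hessian f x"
  let ?g = "grad f"
  obtain r where r: "r > 0" "ball x r \<subseteq> X" using X open_contains_ball by blast
  have hd: "(?g has_derivative (\<lambda>h. ?H *v h)) (at x)" using hess_deriv[OF dg] .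
  then obtain d1 where d1: "d1 > 0"
    "\<And>y. norm (y - x) < d1 \<Longrightarrow> norm (?g y - ?g x - ?H *v (y - x)) \<le> e * norm (y - x)"
    unfolding has_derivative_at_alt using e by blast
  define d where "d = min d1 r / (norm v + norm w + 1)"
  have npos: "norm v + norm w + 1 > 0" by (smt (verit) norm_ge_zero)
  then have dpos: "d > 0" using d1 r unfolding d_def by (intro divide_pos_pos) auto
  show ?thesis
  proof (intro exI[of _ d] conjI allI impI dpos)
    fix s :: real assume s: "0 < s \<and> s < d"
    have sm: "s * (norm v + norm w) < min d1 r"
    proof -
      have "s * (norm v + norm w) \<le> s * (norm v + norm w + 1)" using s by simp
      also have "\<dots> < d * (norm v + norm w + 1)"
        using s npos by (intro mult_strict_right_mono) auto
      also have "\<dots> = min d1 r" unfolding d_def using npos by simp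
      finally show ?thesis .
    qed
    then have sm1: "s * (norm v + norm w) < d1" and sm2: "s * (norm v + norm w) < r" by auto
    define a where "a = x + s *\<^sub>R w"
    define b where "b = s *\<^sub>R v"
    define \<phi> where "\<phi> = (\<lambda>t. f (a + t *\<^sub>R b) - f (x + t *\<^sub>R b))"
    have nrm1: "norm ((a + t *\<^sub>R b) - x) \<le> s * (norm v + norm w)" if "0 \<le> t" "t \<le> 1" for t
    proof -
      have "norm ((a + t *\<^sub>R b) - x) = norm ((t * s) *\<^sub>R v + s *\<^sub>R w)" by (simp add: a_def b_def algebra_simps)
      also have "\<dots> \<le> norm ((t * s) *\<^sub>R v) + norm (s *\<^sub>R w)" by (rule norm_triangle_ineq)
      also have "\<dots> = t * s * norm v + s * norm w" using that s by simp
      also have "\<dots> \<le> s * norm v + s * norm w" using that s by (simp add: mult_left_le_one_le mult_right_le_one_le)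
      finally show ?thesis by (simp add: algebra_simps)
    qed
    have nrm2: "norm ((x + t *\<^sub>R b) - x) \<le> s * norm v" if "0 \<le> t" "t \<le> 1" for t
      using that s by (simp add: b_def mult_left_le_one_le)
    have inX1: "a + t *\<^sub>R b \<in> X" if "0 \<le> t" "t \<le> 1" for t
    proof -
      have "norm ((a + t *\<^sub>R b) - x) < r" using nrm1[OF that] sm2 by linarith
      then have "a + t *\<^sub>R b \<in> ball x r" by (simp add: dist_norm norm_minus_commute)
      then show ?thesis using r(2) by blast
    qed
    have inX2: "x + t *\<^sub>R b \<in> X" if "0 \<le> t" "t \<le> 1" for t
    proof -
      have "s * norm v \<le> s * (norm v + norm w)" using s by simp
      then have "norm ((x + t *\<^sub>R b) - x) < r" using nrm2[OF that] sm2 by linarith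
      then have "x + t *\<^sub>R b \<in> ball x r" by (simp add: dist_norm norm_minus_commute)
      then show ?thesis using r(2) by blast
    qed
    have der: "(\<phi> has_real_derivative ((?g (a + t *\<^sub>R b) - ?g (x + t *\<^sub>R b)) \<bullet> b)) (at t)"
      if "0 \<le> t" "t \<le> 1" for t
      unfolding \<phi>_def inner_diff_left
      by (intro DERIV_diff line_deriv grad_deriv df inX1 inX2 that)
    obtain \<tau> where tau: "0 < \<tau>" "\<tau> < 1"
      "\<phi> 1 - \<phi> 0 = (1 - 0) * ((?g (a + \<tau> *\<^sub>R b) - ?g (x + \<tau> *\<^sub>R b)) \<bullet> b)"
      using MVT2[OF zero_less_one der] by blast
    define p1 where "p1 = a + \<tau> *\<^sub>R b"
    define p2 where "p2 = x + \<tau> *\<^sub>R b"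
    define e1 where "e1 = ?g p1 - ?g x - ?H *v (p1 - x)"
    define e2 where "e2 = ?g p2 - ?g x - ?H *v (p2 - x)"
    have np1: "norm (p1 - x) \<le> s * (norm v + norm w)" using nrm1 tau unfolding p1_def by simp
    have np2: "norm (p2 - x) \<le> s * norm v" using nrm2 tau unfolding p2_def by simp
    have ne1: "norm e1 \<le> e * (s * (norm v + norm w))"
    proof -
      have "norm e1 \<le> e * norm (p1 - x)" unfolding e1_def using d1(2) np1 sm1 by force
      also have "\<dots> \<le> e * (s * (norm v + norm w))" using np1 e by (simp add: mult_left_mono)
      finally show ?thesis .
    qed
    have ne2: "norm e2 \<le> e * (s * norm v)"
    proof -
      have "s * norm v \<le> s * (norm v + norm w)" using s by simp
      then have "norm e2 \<le> e * norm (p2 - x)" unfolding e2_def using d1(2) np2 sm1 by force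
      also have "\<dots> \<le> e * (s * norm v)" using np2 e by (simp add: mult_left_mono)
      finally show ?thesis .
    qed
    have "?g p1 - ?g p2 = ?H *v (p1 - p2) + (e1 - e2)"
      unfolding e1_def e2_def by (simp add: algebra_simps)
    also have "p1 - p2 = s *\<^sub>R w" by (simp add: p1_def p2_def a_def)
    finally have gd: "?g p1 - ?g p2 = s *\<^sub>R (?H *v w) + (e1 - e2)"
      by (simp add: matrix_vector_mult_scaleR)
    have "\<phi> 1 - \<phi> 0 = f (x + s *\<^sub>R v + s *\<^sub>R w) - f (x + s *\<^sub>R v) - f (x + s *\<^sub>R w) + f x"
      by (simp add: \<phi>_def a_def b_def add.commute add.left_commute)
    moreover have "(?g p1 - ?g p2) \<bullet> b = s^2 * ((?H *v w) \<bullet> v) + (e1 - e2) \<bullet> b"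
      unfolding gd b_def by (simp add: inner_add_left power2_eq_square distrib_left)
    moreover have "\<phi> 1 - \<phi> 0 = (?g p1 - ?g p2) \<bullet> b" using tau(3) by (simp add: p1_def p2_def)
    ultimately have "(f (x + s *\<^sub>R v + s *\<^sub>R w) - f (x + s *\<^sub>R v) - f (x + s *\<^sub>R w) + f x)
        - s^2 * ((?H *v w) \<bullet> v) = (e1 - e2) \<bullet> b"
      by linarith
    also have "\<bar>\<dots>\<bar> \<le> norm (e1 - e2) * norm b" by (rule Cauchy_Schwarz_ineq2)
    also have "\<dots> \<le> (e * (s * (norm v + norm w)) + e * (s * norm v)) * (s * norm v)"
      unfolding b_def using s ne1 ne2
      using e by (intro mult_mono order_trans[OF norm_triangle_ineq4] add_mono) (auto intro!: add_nonneg_nonneg mult_nonneg_nonneg)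
    also have "\<dots> = e * s^2 * ((2 * norm v + norm w) * norm v)"
      by (simp add: power2_eq_square algebra_simps)
    finally show "\<bar>(f (x + s *\<^sub>R v + s *\<^sub>R w) - f (x + s *\<^sub>R v) - f (x + s *\<^sub>R w) + f x)
        - s^2 * ((?H *v w) \<bullet> v)\<bar> \<le> e * s^2 * ((2 * norm v + norm w) * norm v)" .
  qed
qed

lemma hess_sym:
  fixes f :: "real^'n \<Rightarrow> real"
  assumes X: "open X" "x \<in> X" and df: "\<And>z. z \<in> X \<Longrightarrow> f differentiable (at z)"
    and dg: "grad f differentiable (at x)"
  shows "(hessian f x *v w) \<bullet> v = (hessian f x *v v) \<bullet> w"
proof -
  let ?H = "hessian f x"
  define K where "K = (2 * norm v + norm w) * norm v + (2 * norm w + norm v) * norm w + 1"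
  have Kpos: "K > 0" unfolding K_def by (smt (verit) norm_ge_zero mult_nonneg_nonneg)
  define \<Delta> where "\<Delta> = (\<lambda>s. f (x + s *\<^sub>R v + s *\<^sub>R w) - f (x + s *\<^sub>R v) - f (x + s *\<^sub>R w) + f x)"
  have D: "\<Delta> s = f (x + s *\<^sub>R w + s *\<^sub>R v) - f (x + s *\<^sub>R w) - f (x + s *\<^sub>R v) + f x" for s
    unfolding \<Delta>_def by (simp add: add.commute add.left_commute)
  have bound: "\<bar>(?H *v w) \<bullet> v - (?H *v v) \<bullet> w\<bar> \<le> e * K" if e: "e > 0" for e
  proof -
    obtain d1 where d1: "d1 > 0" "\<And>s. 0 < s \<and> s < d1 \<Longrightarrow>
      \<bar>\<Delta> s - s^2 * ((?H *v w) \<bullet> v)\<bar> \<le> e * s^2 * ((2 * norm v + norm w) * norm v)"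
      using schwarz_aux[OF X df dg e, of v w] unfolding \<Delta>_def by blast
    obtain d2 where d2: "d2 > 0" "\<And>s. 0 < s \<and> s < d2 \<Longrightarrow>
      \<bar>\<Delta> s - s^2 * ((?H *v v) \<bullet> w)\<bar> \<le> e * s^2 * ((2 * norm w + norm v) * norm w)"
      using schwarz_aux[OF X df dg e, of w v] unfolding D by blast
    define s where "s = min d1 d2 / 2"
    have s: "0 < s" "s < d1" "s < d2" using d1 d2 by (auto simp: s_def)
    have s2: "s^2 > 0" using s by simp
    have "s^2 * \<bar>(?H *v w) \<bullet> v - (?H *v v) \<bullet> w\<bar> = \<bar>(\<Delta> s - s^2 * ((?H *v v) \<bullet> w)) - (\<Delta> s - s^2 * ((?H *v w) \<bullet> v))\<bar>"
      using s2 by (simp add: abs_mult right_diff_distrib[symmetric] abs_minus_commute)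
    also have "\<dots> \<le> e * s^2 * ((2 * norm w + norm v) * norm w) + e * s^2 * ((2 * norm v + norm w) * norm v)"
      using d1(2)[of s] d2(2)[of s] s by linarith
    also have "\<dots> \<le> s^2 * (e * K)"
      using e s2 by (simp add: K_def algebra_simps)
    finally show ?thesis using s2 by simp
  qed
  show ?thesis
  proof (rule ccontr)
    assume ne: "(?H *v w) \<bullet> v \<noteq> (?H *v v) \<bullet> w"
    define e where "e = \<bar>(?H *v w) \<bullet> v - (?H *v v) \<bullet> w\<bar> / (2 * K)"
    have epos: "e > 0" using ne Kpos by (simp add: e_def)
    have "e * K = \<bar>(?H *v w) \<bullet> v - (?H *v v) \<bullet> w\<bar> / 2" using Kpos by (simp add: e_def)
    then show False using bound[OF epos] ne by simp
  qed
qed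

lemma grad_ineq:
  fixes \<phi> :: "real^'n \<Rightarrow> real"
  assumes X: "open X" and cvx: "convex_on X \<phi>"
    and df: "\<And>z. z \<in> X \<Longrightarrow> \<phi> differentiable (at z)"
    and x: "x \<in> X" and w: "w \<in> X"
  shows "\<phi> w \<ge> \<phi> x + grad \<phi> x \<bullet> (w - x)"
proof -
  define A where "A = {t::real. x + t *\<^sub>R (w - x) \<in> X}"
  define h where "h = (\<lambda>t. \<phi> (x + t *\<^sub>R (w - x)))"
  have cX: "convex X" using cvx by (simp add: convex_on_def)
  have hA: "convex_on A h"
  proof (rule convex_onI)
    have eq: "A = (\<lambda>t::real. t *\<^sub>R (w - x)) -` ((+) (-x) ` X)"
    proof (intro set_eqI iffI)
      fix t assume "t \<in> A"
      then have "x + t *\<^sub>R (w - x) \<in> X" by (simp add: A_def)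
      moreover have "t *\<^sub>R (w - x) = -x + (x + t *\<^sub>R (w - x))" by simp
      ultimately show "t \<in> (\<lambda>t::real. t *\<^sub>R (w - x)) -` ((+) (-x) ` X)" by blast
    next
      fix t assume "t \<in> (\<lambda>t::real. t *\<^sub>R (w - x)) -` ((+) (-x) ` X)"
      then obtain z where "z \<in> X" "t *\<^sub>R (w - x) = -x + z" by auto
      then have "x + t *\<^sub>R (w - x) = z" by (simp add: algebra_simps)
      then show "t \<in> A" using \<open>z \<in> X\<close> by (simp add: A_def)
    qed
    have "linear (\<lambda>t::real. t *\<^sub>R (w - x))" by (rule linear_scaleR_left)
    then show "convex A" unfolding eq by (intro convex_linear_vimage convex_translation cX)
  next
    fix t a b :: real assume t: "0 < t" "t < 1" and ab: "a \<in> A" "b \<in> A"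
    have "x + ((1 - t) * a + t * b) *\<^sub>R (w - x) = (1 - t) *\<^sub>R (x + a *\<^sub>R (w - x)) + t *\<^sub>R (x + b *\<^sub>R (w - x))"
      by (simp add: algebra_simps)
    then show "h ((1 - t) *\<^sub>R a + t *\<^sub>R b) \<le> (1 - t) * h a + t * h b"
      unfolding h_def using convex_onD[OF cvx, of t] t ab unfolding A_def by simp
  qed
  have oA: "open A"
  proof -
    have "continuous_on UNIV (\<lambda>t::real. x + t *\<^sub>R (w - x))" by (intro continuous_intros)
    then have "open ((\<lambda>t::real. x + t *\<^sub>R (w - x)) -` X)" using X open_vimage by blast
    then show ?thesis unfolding A_def by (simp add: vimage_def)
  qed
  have 0: "0 \<in> A" "1 \<in> A" using x w by (auto simp: A_def)
  have der: "(h has_real_derivative (grad \<phi> x \<bullet> (w - x))) (at 0 within A)"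
    unfolding h_def using line_deriv[of \<phi> "grad \<phi> x" x 0 "w - x"] grad_deriv[OF df[OF x]]
    by (auto intro: has_field_derivative_at_within)
  have "h 1 - h 0 \<ge> (grad \<phi> x \<bullet> (w - x)) * (1 - 0)"
    using convex_on_imp_above_tangent[OF hA convex_connected[OF convex_on_imp_convex[OF hA]] _ 0(2) der] 0(1) oA
    by (simp add: interior_open)
  then show ?thesis by (simp add: h_def)
qed

lemma grad_ineq_strict:
  fixes \<phi> :: "real^'n \<Rightarrow> real"
  assumes X: "open X" and cvx: "convex_on X \<phi>" and scvx: "strictly_convex_on X \<phi>"
    and df: "\<And>z. z \<in> X \<Longrightarrow> \<phi> differentiable (at z)"
    and x: "x \<in> X" and w: "w \<in> X" and ne: "x \<noteq> w"
  shows "\<phi> w > \<phi> x + grad \<phi> x \<bullet> (w - x)"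
proof -
  define m where "m = (1 - 1/2) *\<^sub>R x + (1/2) *\<^sub>R w"
  have cX: "convex X" using cvx by (simp add: convex_on_def)
  have mX: "m \<in> X" unfolding m_def using cX x w convexD[of X x w "1 - 1/2" "1/2"] by simp
  have H: "\<forall>x\<in>X. \<forall>y\<in>X. \<forall>t::real. x \<noteq> y \<and> 0 < t \<and> t < 1 \<longrightarrow>
        \<phi> ((1 - t) *\<^sub>R x + t *\<^sub>R y) < (1 - t) * \<phi> x + t * \<phi> y"
    using scvx unfolding strictly_convex_on_def .
  have "\<phi> m < (1 - 1/2) * \<phi> x + (1/2) * \<phi> w"
    unfolding m_def using mp[OF spec[OF bspec[OF bspec[OF H x] w], of "1/2"]] ne by simp
  moreover have "\<phi> m \<ge> \<phi> x + grad \<phi> x \<bullet> (m - x)" by (rule grad_ineq[OF X cvx df x mX])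
  moreover have "m - x = (1/2) *\<^sub>R (w - x)"
  proof -
    have "m - x = (1/2) *\<^sub>R w - (1/2) *\<^sub>R x" unfolding m_def
      by (simp add: scaleR_diff_left)
    then show ?thesis by (simp add: scaleR_diff_right)
  qed
  ultimately show ?thesis by (simp add: inner_scaleR_right)
qed

lemma grad_inj:
  fixes \<phi> :: "real^'n \<Rightarrow> real"
  assumes X: "open X" and cvx: "convex_on X \<phi>" and scvx: "strictly_convex_on X \<phi>"
    and df: "\<And>z. z \<in> X \<Longrightarrow> \<phi> differentiable (at z)"
  shows "inj_on (grad \<phi>) X"
proof (rule inj_onI, rule ccontr)
  fix a b assume a: "a \<in> X" and b: "b \<in> X" and eq: "grad \<phi> a = grad \<phi> b" and ne: "a \<noteq> b"
  have 1: "\<phi> b > \<phi> a + grad \<phi> a \<bullet> (b - a)" by (rule grad_ineq_strict[OF X cvx scvx df a b ne])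
  have 2: "\<phi> a > \<phi> b + grad \<phi> b \<bullet> (a - b)" using ne by (intro grad_ineq_strict[OF X cvx scvx df b a]) auto
  have "grad \<phi> a \<bullet> (b - a) + grad \<phi> b \<bullet> (a - b) = 0"
    using eq by (simp add: inner_diff_right)
  then show False using 1 2 by linarith
qed

lemma grad_image_comb:
  fixes \<phi> :: "real^'n \<Rightarrow> real"
  assumes X: "open X" and cX: "convex X" and cvx: "convex_on X \<phi>"
    and scvx: "strictly_convex_on X \<phi>"
    and df: "\<And>z. z \<in> X \<Longrightarrow> \<phi> differentiable (at z)"
    and blow: "\<And>s z. (\<forall>k. s k \<in> X) \<Longrightarrow> s \<longlonglongrightarrow> z \<Longrightarrow> z \<in> frontier X \<Longrightarrow>
        filterlim (\<lambda>k. norm (grad \<phi> (s k))) at_top sequentially"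
    and x1: "x1 \<in> X" and x2: "x2 \<in> X" and t: "0 < t" "t < 1"
  shows "\<exists>z\<in>X. grad \<phi> z = (1 - t) *\<^sub>R grad \<phi> x1 + t *\<^sub>R grad \<phi> x2"
proof -
  define y1 where "y1 = grad \<phi> x1"
  define y2 where "y2 = grad \<phi> x2"
  define y where "y = (1 - t) *\<^sub>R y1 + t *\<^sub>R y2"
  define g where "g = (\<lambda>x. \<phi> x - y \<bullet> x)"
  define D1 where "D1 = (\<lambda>x. \<phi> x - \<phi> x1 - y1 \<bullet> (x - x1))"
  define D2 where "D2 = (\<lambda>x. \<phi> x - \<phi> x2 - y2 \<bullet> (x - x2))"
  define c where "c = (1 - t) * (\<phi> x1 - y1 \<bullet> x1) + t * (\<phi> x2 - y2 \<bullet> x2)"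
  have gD: "g x = c + (1 - t) * D1 x + t * D2 x" for x
    by (simp add: g_def D1_def D2_def c_def y_def inner_add_left inner_diff_right algebra_simps)
  have D1nn: "D1 x \<ge> 0" if "x \<in> X" for x
    using grad_ineq[OF X cvx df x1 that] by (simp add: D1_def y1_def)
  have D2nn: "D2 x \<ge> 0" if "x \<in> X" for x
    using grad_ineq[OF X cvx df x2 that] by (simp add: D2_def y2_def)
  have D1pos: "D1 x > 0" if "x \<in> X" "x \<noteq> x1" for x
    using grad_ineq_strict[OF X cvx scvx df x1 that(1)] that(2) by (simp add: D1_def y1_def)
  have gc: "g x \<ge> c + (1 - t) * D1 x" if "x \<in> X" for x
    using gD[of x] D2nn[OF that] t mult_nonneg_nonneg[of t "D2 x"] by linarith
  have gc0: "g x \<ge> c" if "x \<in> X" for x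
    using gc[OF that] D1nn[OF that] t mult_nonneg_nonneg[of "1 - t" "D1 x"] by linarith
  have contphi: "continuous_on X \<phi>"
    using df by (meson continuous_at_imp_continuous_on differentiable_imp_continuous_within)
  have contg: "continuous_on X g" unfolding g_def by (intro continuous_intros contphi)
  have contD1: "continuous_on X D1" unfolding D1_def by (intro continuous_intros contphi)
  obtain r where r: "r > 0" "cball x1 r \<subseteq> X" using X x1 open_contains_cball by blast
  have sphX: "sphere x1 r \<subseteq> X" using r(2) sphere_cball by blast
  obtain p0 where p0: "p0 \<in> sphere x1 r" "\<And>p. p \<in> sphere x1 r \<Longrightarrow> D1 p0 \<le> D1 p"
    using continuous_attains_inf[of "sphere x1 r" D1] continuous_on_subset[OF contD1 sphX] r(1)
    by fastforce
  define \<mu> where "\<mu> = D1 p0"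
  have mupos: "\<mu> > 0"
  proof -
    have "p0 \<noteq> x1" using p0(1) r(1) by auto
    then show ?thesis unfolding \<mu>_def using D1pos sphX p0(1) by blast
  qed
  have coerc: "D1 x \<ge> \<mu> * norm (x - x1) / r" if xX: "x \<in> X" and nx: "norm (x - x1) \<ge> r" for x
  proof -
    define n where "n = norm (x - x1)"
    have npos: "n > 0" using nx r(1) unfolding n_def by linarith
    define l where "l = r / n"
    have l: "0 < l" "l \<le> 1" using r(1) nx npos by (auto simp: l_def n_def)
    define p where "p = (1 - l) *\<^sub>R x1 + l *\<^sub>R x"
    have pX: "p \<in> X" unfolding p_def using convexD[OF cX x1 xX, of "1 - l" l] l by simp
    have px: "p - x1 = l *\<^sub>R (x - x1)" by (simp add: p_def algebra_simps)
    have "norm (p - x1) = r" unfolding px using l npos r(1) by (simp add: l_def n_def)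
    then have psph: "p \<in> sphere x1 r" by (simp add: dist_norm norm_minus_commute)
    have "\<phi> p \<le> (1 - l) * \<phi> x1 + l * \<phi> x"
      unfolding p_def using convex_onD[OF cvx, of l x1 x] l x1 xX by simp
    then have "D1 p \<le> l * D1 x"
      unfolding D1_def px by (simp add: inner_scaleR_right algebra_simps)
    moreover have "\<mu> \<le> D1 p" unfolding \<mu>_def using p0(2)[OF psph] .
    ultimately have "\<mu> \<le> l * D1 x" by simp
    then have "\<mu> * n \<le> r * D1 x" using npos by (simp add: l_def field_simps)
    then show ?thesis using r(1) by (simp add: n_def field_simps)
  qed
  define R where "R = max r (r * (g x1 + 1 - c) / ((1 - t) * \<mu>))"
  have sub: "norm (x - x1) \<le> R" if xX: "x \<in> X" and gx: "g x \<le> g x1 + 1" for x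
  proof (cases "norm (x - x1) \<ge> r")
    case True
    have "(1 - t) * (\<mu> * norm (x - x1) / r) \<le> (1 - t) * D1 x"
      using coerc[OF xX True] t by (intro mult_left_mono) auto
    also have "\<dots> \<le> g x1 + 1 - c" using gc[OF xX] gx by simp
    finally have "norm (x - x1) * ((1 - t) * \<mu>) \<le> r * (g x1 + 1 - c)"
      using r(1) by (simp add: field_simps)
    then have "norm (x - x1) \<le> r * (g x1 + 1 - c) / ((1 - t) * \<mu>)"
      using t mupos by (simp add: field_simps)
    then show ?thesis unfolding R_def by simp
  next
    case False then show ?thesis unfolding R_def by simp
  qed
  define L where "L = Inf (g ` X)"
  have bdd: "bdd_below (g ` X)" using gc0 by (intro bdd_belowI2[of X c g]) auto
  have Lle: "L \<le> g x" if "x \<in> X" for x unfolding L_def using bdd that by (simp add: cInf_lower)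
  have Lc: "c \<le> L" unfolding L_def using x1 gc0 by (intro cInf_greatest) auto
  have "\<forall>k. \<exists>z. z \<in> X \<and> g z < L + 1 / real (Suc k)"
  proof
    fix k
    have "Inf (g ` X) < L + 1 / real (Suc k)" unfolding L_def by simp
    then obtain a where "a \<in> g ` X" "a < L + 1 / real (Suc k)" using cInf_lessD[of "g ` X"] x1 by blast
    then show "\<exists>z. z \<in> X \<and> g z < L + 1 / real (Suc k)" by blast
  qed
  then obtain zs where zs: "\<And>k. zs k \<in> X" "\<And>k. g (zs k) < L + 1 / real (Suc k)" by metis
  have zsK: "zs k \<in> cball x1 R \<inter> closure X" for k
  proof -
    have "1 / real (Suc k) \<le> 1" by simp
    then have "g (zs k) \<le> g x1 + 1" using zs(2)[of k] Lle[OF x1] by linarith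
    then have "norm (zs k - x1) \<le> R" using sub zs(1) by blast
    then show ?thesis using zs(1)[of k] closure_subset by (auto simp: dist_norm norm_minus_commute)
  qed
  have "compact (cball x1 R \<inter> closure X)" by (intro compact_Int_closed) auto
  then obtain z \<sigma> where z: "z \<in> cball x1 R \<inter> closure X" and \<sigma>: "strict_mono \<sigma>" and zlim: "(zs \<circ> \<sigma>) \<longlonglongrightarrow> z"
    using seq_compactE[OF compact_imp_seq_compact] zsK by metis
  have glim: "(\<lambda>k. g (zs (\<sigma> k))) \<longlonglongrightarrow> L"
  proof (rule tendsto_sandwich[where f="\<lambda>k. L" and h="\<lambda>k. L + 1 / real (Suc k)"])
    show "\<forall>\<^sub>F k in sequentially. L \<le> g (zs (\<sigma> k))" using Lle zs(1) by auto
    show "\<forall>\<^sub>F k in sequentially. g (zs (\<sigma> k)) \<le> L + 1 / real (Suc k)"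
    proof (rule always_eventually, rule allI)
      fix k
      have "real (Suc k) \<le> real (Suc (\<sigma> k))" using seq_suble[OF \<sigma>, of k] by simp
      then have "1 / real (Suc (\<sigma> k)) \<le> 1 / real (Suc k)" by (intro divide_left_mono) auto
      then show "g (zs (\<sigma> k)) \<le> L + 1 / real (Suc k)" using zs(2)[of "\<sigma> k"] by linarith
    qed
    show "(\<lambda>k. L) \<longlonglongrightarrow> L" by simp
    have "(\<lambda>k. 1 / real (Suc k)) \<longlonglongrightarrow> 0" using LIMSEQ_inverse_real_of_nat by (simp add: inverse_eq_divide)
    then show "(\<lambda>k. L + 1 / real (Suc k)) \<longlonglongrightarrow> L" using tendsto_add[of "\<lambda>k. L" L sequentially] by fastforce
  qed
  have zs\<sigma>: "(\<lambda>k. zs (\<sigma> k)) \<longlonglongrightarrow> z" using zlim by (simp add: o_def)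
  have zX: "z \<in> X"
  proof (rule ccontr)
    assume znX: "z \<notin> X"
    have zfr: "z \<in> frontier X" using z znX X by (simp add: frontier_def interior_open)
    have ne: "x1 \<noteq> z" using znX x1 by auto
    have segX: "open_segment x1 z \<subseteq> X"
      using in_interior_closure_convex_segment[OF cX, of x1 z] x1 z X by (simp add: interior_open)
    obtain Bg where Bg: "\<And>w. w \<in> cball x1 r \<Longrightarrow> \<bar>g w\<bar> \<le> Bg"
    proof -
      have "compact (g ` cball x1 r)"
        by (intro compact_continuous_image continuous_on_subset[OF contg r(2)]) auto
      then obtain b where "\<forall>a\<in>g ` cball x1 r. norm a \<le> b" using compact_imp_bounded bounded_iff by metis
      then show ?thesis using that[of b] by (simp add: mem_cball)
    qed
    have Bgc: "Bg \<ge> c" using Bg[of x1] gc0[OF x1] r(1) by force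
    define B where "B = norm y + (Bg - c) / r"
    have qbound: "norm (grad \<phi> q) \<le> B" if qs: "q \<in> open_segment x1 z" for q
    proof -
      have qX: "q \<in> X" using segX qs by blast
      obtain s where s: "0 < s" "s < 1" "q = (1 - s) *\<^sub>R x1 + s *\<^sub>R z" using qs in_segment(2) by blast
      define G where "G = grad \<phi> q - y"
      have gin: "g w \<ge> g q + G \<bullet> (w - q)" if "w \<in> X" for w
        using grad_ineq[OF X cvx df qX that] by (simp add: g_def G_def inner_diff_left inner_diff_right)
      have a: "G \<bullet> (z - q) \<le> L - g q"
      proof (rule LIMSEQ_le)
        show "(\<lambda>k. G \<bullet> (zs (\<sigma> k) - q)) \<longlonglongrightarrow> G \<bullet> (z - q)" by (intro tendsto_intros zs\<sigma>)
        show "(\<lambda>k. g (zs (\<sigma> k)) - g q) \<longlonglongrightarrow> L - g q" by (intro tendsto_intros glim)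
        show "\<exists>N. \<forall>n\<ge>N. G \<bullet> (zs (\<sigma> n) - q) \<le> g (zs (\<sigma> n)) - g q" using gin[OF zs(1)] by (intro exI[of _ 0] allI impI) (simp add: algebra_simps)
      qed
      have zq: "z - q = (1 - s) *\<^sub>R (z - x1)" by (simp add: s(3) algebra_simps)
      have x1q: "x1 - q = (- s) *\<^sub>R (z - x1)" by (simp add: s(3) algebra_simps)
      have "(1 - s) * (G \<bullet> (z - x1)) \<le> 0" using a Lle[OF qX] zq by simp
      then have "G \<bullet> (z - x1) \<le> 0" using s by (simp add: mult_le_0_iff)
      then have Gx1: "G \<bullet> (x1 - q) \<ge> 0" using s unfolding x1q by (simp add: mult_le_0_iff)
      have "norm G \<le> (Bg - c) / r"
      proof (cases "G = 0")
        case True then show ?thesis using Bgc r(1) by simp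
      next
        case False
        then have nG: "norm G > 0" by simp
        define w where "w = x1 + (r / norm G) *\<^sub>R G"
        have "norm (w - x1) = r" using nG r(1) by (simp add: w_def)
        then have wc: "w \<in> cball x1 r" by (simp add: dist_norm norm_minus_commute)
        then have wX: "w \<in> X" using r(2) by blast
        have "G \<bullet> (w - q) = G \<bullet> (x1 - q) + (r / norm G) * (G \<bullet> G)"
          by (simp add: w_def inner_add_right inner_diff_right algebra_simps)
        also have "(r / norm G) * (G \<bullet> G) = r * norm G"
          using nG by (simp add: power2_norm_eq_inner[symmetric] power2_eq_square)
        finally have "G \<bullet> (w - q) \<ge> r * norm G" using Gx1 by simp
        then have "g w \<ge> c + r * norm G" using gin[OF wX] gc0[OF qX] by simp
        moreover have "g w \<le> Bg" using Bg[OF wc] by simp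
        ultimately have "r * norm G \<le> Bg - c" by simp
        then show ?thesis using r(1) by (simp add: field_simps)
      qed
      moreover have "norm (grad \<phi> q) \<le> norm y + norm G"
        using norm_triangle_ineq[of y G] by (simp add: G_def)
      ultimately show ?thesis unfolding B_def by simp
    qed
    define qs where "qs = (\<lambda>j::nat. (1 / real (Suc (Suc j))) *\<^sub>R x1 + (1 - 1 / real (Suc (Suc j))) *\<^sub>R z)"
    have qseg: "qs j \<in> open_segment x1 z" for j
    proof -
      have "0 < 1 - 1 / real (Suc (Suc j))" "1 - 1 / real (Suc (Suc j)) < 1" by (auto simp: field_simps)
      moreover have "qs j = (1 - (1 - 1 / real (Suc (Suc j)))) *\<^sub>R x1 + (1 - 1 / real (Suc (Suc j))) *\<^sub>R z"
        by (simp add: qs_def)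
      ultimately show ?thesis using ne in_segment(2) by blast
    qed
    have qsX: "\<forall>j. qs j \<in> X" using qseg segX by blast
    have inv0: "(\<lambda>j. 1 / real (Suc (Suc j))) \<longlonglongrightarrow> 0"
      using LIMSEQ_Suc[OF LIMSEQ_inverse_real_of_nat] by (simp add: inverse_eq_divide)
    have "qs \<longlonglongrightarrow> 0 *\<^sub>R x1 + (1 - 0) *\<^sub>R z"
      unfolding qs_def by (intro tendsto_intros inv0)
    then have qslim: "qs \<longlonglongrightarrow> z" by simp
    have "filterlim (\<lambda>k. norm (grad \<phi> (qs k))) at_top sequentially"
      by (rule blow[OF qsX qslim zfr])
    then have "eventually (\<lambda>k. B + 1 \<le> norm (grad \<phi> (qs k))) sequentially"
      by (simp add: filterlim_at_top)
    then obtain k where "B + 1 \<le> norm (grad \<phi> (qs k))" by (meson eventually_sequentially order_refl)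
    with qbound[OF qseg[of k]] show False by simp
  qed
  have "isCont g z" using contg zX X by (simp add: continuous_on_eq_continuous_at)
  from isCont_tendsto_compose[OF this zs\<sigma>]
  have "(\<lambda>k. g (zs (\<sigma> k))) \<longlonglongrightarrow> g z" .
  then have gz: "g z = L" using glim LIMSEQ_unique by blast
  have min: "eventually (\<lambda>w. g z \<le> g w) (at z)"
    using eventually_at_in_open'[OF X zX] by eventually_elim (simp add: gz Lle)
  have gder: "(g has_derivative (\<lambda>h. grad \<phi> z \<bullet> h - y \<bullet> h)) (at z)"
    unfolding g_def by (intro has_derivative_diff grad_deriv df zX has_derivative_inner_right has_derivative_ident) 
  have "(\<lambda>h. grad \<phi> z \<bullet> h - y \<bullet> h) = (\<lambda>h. 0)" by (rule has_derivative_local_min[OF gder min])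
  then have "grad \<phi> z \<bullet> (grad \<phi> z - y) - y \<bullet> (grad \<phi> z - y) = 0" by metis
  then have "(grad \<phi> z - y) \<bullet> (grad \<phi> z - y) = 0" by (simp add: inner_diff_left)
  then have "grad \<phi> z = y" by simp
  then show ?thesis using zX by (auto simp: y_def y1_def y2_def)
qed

lemma key_alg:
  fixes J JT :: "'a::real_inner \<Rightarrow> 'a"
  assumes linJ: "linear J" and linJT: "linear JT"
    and adj: "\<And>a b. JT a \<bullet> b = a \<bullet> J b"
    and hb: "\<And>w. m * (norm w)\<^sup>2 \<le> J w \<bullet> w"
    and hc: "\<And>w. norm (J w) \<le> M * norm w"
    and hd: "\<And>w. norm (JT w - J w) \<le> \<delta> * norm w"
    and m: "m \<ge> 0" and M: "M > 0" and d: "\<delta> \<ge> 0"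
  shows "(m + M) * (J v \<bullet> v) - (norm (J v))\<^sup>2 - (m * M - M * \<delta> - \<delta>\<^sup>2 / 4) * (norm v)\<^sup>2 \<ge> 0"
proof -
  interpret J: linear J by fact
  interpret JT: linear JT by fact
  define S where "S = (\<lambda>w. (1/2) *\<^sub>R (J w + JT w))"
  define K where "K = (\<lambda>w. (1/2) *\<^sub>R (J w - JT w))"
  define P where "P = (\<lambda>w. S w - m *\<^sub>R w)"
  have JSK: "J v = S v + K v" by (simp add: S_def K_def algebra_simps scaleR_2[symmetric])
  have JTn: "norm (JT w) \<le> M * norm w" for w
  proof -
    have "(norm (JT w))\<^sup>2 = w \<bullet> J (JT w)" by (simp add: power2_norm_eq_inner adj)
    also have "\<dots> \<le> norm w * norm (J (JT w))" by (rule norm_cauchy_schwarz)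
    also have "\<dots> \<le> norm w * (M * norm (JT w))" by (intro mult_left_mono hc) auto
    finally have "norm (JT w) * norm (JT w) \<le> (M * norm w) * norm (JT w)"
      by (simp add: power2_eq_square algebra_simps)
    then show ?thesis
      using M by (cases "norm (JT w) = 0") (auto intro: mult_nonneg_nonneg)
  qed
  have Ssym: "S a \<bullet> b = a \<bullet> S b" for a b
    using adj[of a b] adj[of b a] by (simp add: S_def inner_add_left inner_add_right inner_commute)
  have SJ: "S w \<bullet> w = J w \<bullet> w" for w
    using adj[of w w] by (simp add: S_def inner_add_left inner_add_right inner_commute)
  have Klin: "K v \<bullet> v = 0" using adj[of v v] by (simp add: K_def inner_diff_left inner_diff_right inner_commute)
  have Sn: "norm (S v) \<le> M * norm v"
  proof -
    have "norm (J v + JT v) \<le> norm (J v) + norm (JT v)" by (rule norm_triangle_ineq)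
    also have "\<dots> \<le> 2 * (M * norm v)" using hc[of v] JTn[of v] by simp
    finally show ?thesis by (simp add: S_def)
  qed
  have Kn: "norm (K v) \<le> (\<delta> / 2) * norm v"
  proof -
    have "norm (J v - JT v) = norm (JT v - J v)" by (rule norm_minus_commute)
    then show ?thesis using hd[of v] by (simp add: K_def)
  qed
  have Plin: "P (a - c *\<^sub>R b) = P a - c *\<^sub>R P b" for a b c
    by (simp add: P_def S_def J.diff J.scale JT.diff JT.scale algebra_simps)
  have Psym: "P a \<bullet> b = a \<bullet> P b" for a b
    using Ssym[of a b] by (simp add: P_def inner_diff_left inner_diff_right inner_commute)
  have Ppos: "0 \<le> w \<bullet> P w" for w
    using hb[of w] SJ[of w] by (simp add: P_def inner_diff_right power2_norm_eq_inner inner_commute)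
  have Pup: "w \<bullet> P w \<le> (M - m) * (norm w)\<^sup>2" for w
  proof -
    have "J w \<bullet> w \<le> norm (J w) * norm w" by (rule norm_cauchy_schwarz)
    also have "\<dots> \<le> M * norm w * norm w" by (intro mult_right_mono hc) auto
    finally have "J w \<bullet> w \<le> M * (norm w)\<^sup>2" by (simp add: power2_eq_square)
    then show ?thesis using SJ[of w]
      by (simp add: P_def inner_diff_right power2_norm_eq_inner inner_commute algebra_simps)
  qed
  define p where "p = P v"
  have quad: "0 \<le> v \<bullet> p - 2 * a * (p \<bullet> p) + a\<^sup>2 * (p \<bullet> P p)" for a
  proof -
    have "0 \<le> (v - a *\<^sub>R p) \<bullet> P (v - a *\<^sub>R p)" by (rule Ppos)
    also have "\<dots> = (v - a *\<^sub>R p) \<bullet> (p - a *\<^sub>R P p)" by (simp add: Plin p_def)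
    also have "\<dots> = v \<bullet> p - a * (v \<bullet> P p) - a * (p \<bullet> p) + a\<^sup>2 * (p \<bullet> P p)"
      by (simp add: inner_diff_left inner_diff_right power2_eq_square algebra_simps)
    also have "v \<bullet> P p = p \<bullet> p" using Psym[of v p] by (simp add: p_def)
    finally show ?thesis by (simp add: algebra_simps)
  qed
  have pP: "p \<bullet> P p \<le> (M - m) * (p \<bullet> p)" using Pup[of p] by (simp add: power2_norm_eq_inner)
  have vp0: "0 \<le> v \<bullet> p" using Ppos[of v] by (simp add: p_def)
  have Pineq: "p \<bullet> p \<le> (M - m) * (v \<bullet> p)"
  proof (cases "M > m")
    case True
    define a where "a = 1 / (M - m)"
    have apos: "a > 0" using True by (simp add: a_def)
    have "a\<^sup>2 * (p \<bullet> P p) \<le> a\<^sup>2 * ((M - m) * (p \<bullet> p))" using pP by (intro mult_left_mono) auto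
    also have "a\<^sup>2 * ((M - m) * (p \<bullet> p)) = a * (p \<bullet> p)" using True by (simp add: a_def power2_eq_square)
    finally have "0 \<le> v \<bullet> p - a * (p \<bullet> p)" using quad[of a] by simp
    then have "(M - m) * (a * (p \<bullet> p)) \<le> (M - m) * (v \<bullet> p)" using True by (intro mult_left_mono) auto
    then show ?thesis using True by (simp add: a_def)
  next
    case False
    have "(M - m) * (p \<bullet> p) \<le> 0" using False by (simp add: mult_nonpos_nonneg)
    then have "p \<bullet> P p \<le> 0" using pP by simp
    moreover have vp: "v \<bullet> p \<le> 0"
    proof -
      have "v \<bullet> p \<le> (M - m) * (norm v)\<^sup>2" using Pup[of v] by (simp add: p_def)
      also have "\<dots> \<le> 0" using False by (simp add: mult_nonpos_nonneg)
      finally show ?thesis .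
    qed
    ultimately have "p \<bullet> p \<le> 0" using quad[of 1] by simp
    then have "p \<bullet> p = 0" using inner_ge_zero[of p] by linarith
    moreover have "v \<bullet> p = 0" using vp vp0 by linarith
    ultimately show ?thesis by simp
  qed
  have Sv: "S v = p + m *\<^sub>R v" by (simp add: p_def P_def)
  have S2: "(norm (S v))\<^sup>2 \<le> (M + m) * (S v \<bullet> v) - m * M * (norm v)\<^sup>2"
  proof -
    have "(norm (S v))\<^sup>2 = p \<bullet> p + 2 * m * (v \<bullet> p) + m\<^sup>2 * (v \<bullet> v)"
      unfolding Sv power2_norm_eq_inner
      by (simp add: inner_add_left inner_add_right inner_commute power2_eq_square algebra_simps)
    moreover have "S v \<bullet> v = v \<bullet> p + m * (v \<bullet> v)"
      unfolding Sv inner_add_left inner_scaleR_left by (simp add: inner_commute[of p v])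
    moreover have "(norm v)\<^sup>2 = v \<bullet> v" by (simp add: power2_norm_eq_inner)
    ultimately show ?thesis using Pineq by (simp add: power2_eq_square algebra_simps)
  qed
  have cross: "S v \<bullet> K v \<le> M * norm v * ((\<delta> / 2) * norm v)"
  proof -
    have "S v \<bullet> K v \<le> norm (S v) * norm (K v)" by (rule norm_cauchy_schwarz)
    also have "\<dots> \<le> M * norm v * ((\<delta> / 2) * norm v)" using Sn Kn M by (intro mult_mono) auto
    finally show ?thesis .
  qed
  have K2: "(norm (K v))\<^sup>2 \<le> ((\<delta> / 2) * norm v)\<^sup>2" using Kn by (intro power_mono) auto
  have J2: "(norm (J v))\<^sup>2 = (norm (S v))\<^sup>2 + 2 * (S v \<bullet> K v) + (norm (K v))\<^sup>2"
    unfolding JSK power2_norm_eq_inner by (simp add: inner_add_left inner_add_right inner_commute)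
  have Jv: "J v \<bullet> v = S v \<bullet> v" using SJ by simp
  show ?thesis
    using S2 cross K2 unfolding J2 Jv by (simp add: power2_eq_square algebra_simps)
qed

lemma matrix_inv_both:
  fixes A :: "real^'n^'n"
  assumes "invertible A"
  shows "A ** matrix_inv A = mat 1" "matrix_inv A ** A = mat 1"
proof -
  have "\<exists>A'. A ** A' = mat 1 \<and> A' ** A = mat 1" using assms by (simp add: invertible_def)
  then have "A ** matrix_inv A = mat 1 \<and> matrix_inv A ** A = mat 1"
    unfolding matrix_inv_def by (rule someI_ex)
  then show "A ** matrix_inv A = mat 1" "matrix_inv A ** A = mat 1" by auto
qed

lemma dir_limit:
  fixes F :: "real^'n \<Rightarrow> 'b::real_normed_vector"
  assumes "(F has_derivative F') (at x)"
  shows "((\<lambda>s. (1 / s) *\<^sub>R (F (x + s *\<^sub>R h) - F x)) \<longlongrightarrow> F' h) (at_right 0)"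
proof -
  interpret F': bounded_linear F' using has_derivative_bounded_linear[OF assms] .
  have l: "((\<lambda>s. x + s *\<^sub>R h) has_derivative (\<lambda>s. s *\<^sub>R h)) (at 0 within {0<..})"
    by (auto intro!: derivative_eq_intros)
  have "((\<lambda>s. F (x + s *\<^sub>R h)) has_derivative (\<lambda>s. F' (s *\<^sub>R h))) (at 0 within {0<..})"
    using has_derivative_compose[OF l] assms by simp
  then have "((\<lambda>s. (F (x + s *\<^sub>R h) - F (x + 0 *\<^sub>R h) - F' ((s - 0) *\<^sub>R h)) /\<^sub>R norm (s - 0)) \<longlongrightarrow> 0) (at 0 within {0<..})"
    unfolding has_derivative_at_within by blast
  then have t0: "((\<lambda>s. (1 / s) *\<^sub>R (F (x + s *\<^sub>R h) - F x) - F' h) \<longlongrightarrow> 0) (at_right 0)"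
  proof (rule Lim_transform_eventually)
    show "\<forall>\<^sub>F s in at_right 0. (F (x + s *\<^sub>R h) - F (x + 0 *\<^sub>R h) - F' ((s - 0) *\<^sub>R h)) /\<^sub>R norm (s - 0)
        = (1 / s) *\<^sub>R (F (x + s *\<^sub>R h) - F x) - F' h"
      unfolding eventually_at_filter
    proof (rule always_eventually, intro allI impI)
      fix s :: real assume "s \<noteq> 0" "s \<in> {0<..}"
      then have s: "s > 0" by simp
      then show "(F (x + s *\<^sub>R h) - F (x + 0 *\<^sub>R h) - F' ((s - 0) *\<^sub>R h)) /\<^sub>R norm (s - 0)
        = (1 / s) *\<^sub>R (F (x + s *\<^sub>R h) - F x) - F' h"
        by (simp add: F'.scaleR scaleR_diff_right inverse_eq_divide)
    qed
  qed
  have "((\<lambda>s. ((1 / s) *\<^sub>R (F (x + s *\<^sub>R h) - F x) - F' h) + F' h) \<longlongrightarrow> 0 + F' h) (at_right 0)"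
    by (intro tendsto_add t0 tendsto_const)
  then show ?thesis by simp
qed

lemma scale_ineq:
  fixes A B :: "'a::real_inner"
  assumes "m * (norm B)\<^sup>2 \<le> A \<bullet> B"
  shows "m * (norm (c *\<^sub>R B))\<^sup>2 \<le> (c *\<^sub>R A) \<bullet> (c *\<^sub>R B)"
proof -
  have "c\<^sup>2 * (m * (norm B)\<^sup>2) \<le> c\<^sup>2 * (A \<bullet> B)" using assms by (intro mult_left_mono) auto
  moreover have "(norm (c *\<^sub>R B))\<^sup>2 = c\<^sup>2 * (norm B)\<^sup>2" by (simp add: power_mult_distrib)
  moreover have "(c *\<^sub>R A) \<bullet> (c *\<^sub>R B) = c\<^sup>2 * (A \<bullet> B)" by (simp add: power2_eq_square mult.assoc)
  ultimately show ?thesis by (simp only:) (simp add: algebra_simps)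
qed

lemma scale_ineq2:
  fixes A B :: "'a::real_normed_vector"
  assumes "norm A \<le> M * norm B"
  shows "norm (c *\<^sub>R A) \<le> M * norm (c *\<^sub>R B)"
proof -
  have "\<bar>c\<bar> * norm A \<le> \<bar>c\<bar> * (M * norm B)" using assms by (intro mult_left_mono) auto
  then show ?thesis by (simp add: algebra_simps)
qed

lemma eventually_line_in:
  fixes X :: "(real^'n) set"
  assumes "open X" "x \<in> X"
  shows "\<forall>\<^sub>F s in at_right 0. x + s *\<^sub>R h \<in> X"
proof -
  have "((\<lambda>s::real. x + s *\<^sub>R h) \<longlongrightarrow> x + 0 *\<^sub>R h) (at_right 0)"
    by (intro tendsto_intros)
  then have "((\<lambda>s::real. x + s *\<^sub>R h) \<longlongrightarrow> x) (at_right 0)" by simp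
  from topological_tendstoD[OF this assms] show ?thesis .
qed

lemma pointwise_key:
  fixes f \<phi> :: "real^'n \<Rightarrow> real" and X :: "(real^'n) set"
  assumes X: "open X" and x: "x \<in> X"
    and df: "\<And>z. z \<in> X \<Longrightarrow> f differentiable (at z)"
    and dgf: "\<And>z. z \<in> X \<Longrightarrow> grad f differentiable (at z)"
    and dp: "\<And>z. z \<in> X \<Longrightarrow> \<phi> differentiable (at z)"
    and dgp: "\<And>z. z \<in> X \<Longrightarrow> grad \<phi> differentiable (at z)"
    and A3: "m \<ge> 0"
      "\<And>x x'. x \<in> X \<Longrightarrow> x' \<in> X \<Longrightarrow>
         m * (norm (grad \<phi> x - grad \<phi> x'))\<^sup>2
           \<le> (grad f x - grad f x') \<bullet> (grad \<phi> x - grad \<phi> x')"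
    and A4: "M > 0"
      "\<And>x x'. x \<in> X \<Longrightarrow> x' \<in> X \<Longrightarrow>
         norm (grad f x - grad f x') \<le> M * norm (grad \<phi> x - grad \<phi> x')"
    and A5: "\<delta> \<ge> 0" "invertible (hessian \<phi> x)"
      "spec_norm (commutator (matrix_inv (hessian \<phi> x)) (hessian f x)) \<le> \<delta>"
  shows "(m + M) * ((hessian f x *v (matrix_inv (hessian \<phi> x) *v v)) \<bullet> v)
     - (norm (hessian f x *v (matrix_inv (hessian \<phi> x) *v v)))\<^sup>2
     - (m * M - M * \<delta> - \<delta>\<^sup>2 / 4) * (norm v)\<^sup>2 \<ge> 0"
proof -
  define Hp where "Hp = hessian \<phi> x"
  define Hf where "Hf = hessian f x"
  define Pi where "Pi = matrix_inv Hp"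
  define J where "J = (\<lambda>w. Hf *v (Pi *v w))"
  define JT where "JT = (\<lambda>w. Pi *v (Hf *v w))"
  have inv1: "Hp *v (Pi *v w) = w" for w
    using matrix_inv_both(1)[OF A5(2)] by (simp add: Pi_def Hp_def matrix_vector_mul_assoc)
  have Hfsym: "(Hf *v a) \<bullet> b = a \<bullet> (Hf *v b)" for a b
    using hess_sym[OF X x df dgf[OF x], of b a] unfolding Hf_def by (simp add: inner_commute)
  have Hpsym: "(Hp *v a) \<bullet> b = a \<bullet> (Hp *v b)" for a b
    using hess_sym[OF X x dp dgp[OF x], of b a] unfolding Hp_def by (simp add: inner_commute)
  have Pisym: "(Pi *v a) \<bullet> b = a \<bullet> (Pi *v b)" for a b
  proof -
    have "(Pi *v a) \<bullet> b = (Pi *v a) \<bullet> (Hp *v (Pi *v b))" by (simp add: inv1)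
    also have "\<dots> = (Hp *v (Pi *v a)) \<bullet> (Pi *v b)" by (simp add: Hpsym)
    also have "\<dots> = a \<bullet> (Pi *v b)" by (simp add: inv1)
    finally show ?thesis .
  qed
  have adj: "JT a \<bullet> b = a \<bullet> J b" for a b
    unfolding J_def JT_def using Pisym Hfsym by simp
  have linJ: "linear J" unfolding J_def
    by (intro linear_compose[of "\<lambda>w. Pi *v w" "\<lambda>w. Hf *v w", unfolded o_def] matrix_vector_mul_linear)
  have linJT: "linear JT" unfolding JT_def
    by (intro linear_compose[of "\<lambda>w. Hf *v w" "\<lambda>w. Pi *v w", unfolded o_def] matrix_vector_mul_linear)
  have hd: "norm (JT w - J w) \<le> \<delta> * norm w" for w
  proof -
    have "JT w - J w = commutator Pi Hf *v w"
      by (simp add: JT_def J_def commutator_def matrix_vector_mult_diff_rdistrib matrix_vector_mul_assoc)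
    also have "norm \<dots> \<le> spec_norm (commutator Pi Hf) * norm w"
      unfolding spec_norm_def by (rule onorm) simp
    also have "\<dots> \<le> \<delta> * norm w" using A5(3) unfolding Pi_def Hp_def Hf_def
      by (intro mult_right_mono) auto
    finally show ?thesis .
  qed
  have lims: "((\<lambda>s. (1 / s) *\<^sub>R (grad \<phi> (x + s *\<^sub>R (Pi *v w)) - grad \<phi> x)) \<longlongrightarrow> w) (at_right 0)"
             "((\<lambda>s. (1 / s) *\<^sub>R (grad f (x + s *\<^sub>R (Pi *v w)) - grad f x)) \<longlongrightarrow> J w) (at_right 0)" for w
  proof -
    show "((\<lambda>s. (1 / s) *\<^sub>R (grad \<phi> (x + s *\<^sub>R (Pi *v w)) - grad \<phi> x)) \<longlongrightarrow> w) (at_right 0)"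
      using dir_limit[OF hess_deriv[OF dgp[OF x]], of "Pi *v w"] inv1[of w] unfolding Hp_def by simp
    show "((\<lambda>s. (1 / s) *\<^sub>R (grad f (x + s *\<^sub>R (Pi *v w)) - grad f x)) \<longlongrightarrow> J w) (at_right 0)"
      using dir_limit[OF hess_deriv[OF dgf[OF x]], of "Pi *v w"] unfolding J_def Hf_def by simp
  qed
  have hb: "m * (norm w)\<^sup>2 \<le> J w \<bullet> w" for w
  proof (rule tendsto_le[OF trivial_limit_at_right_real])
    show "((\<lambda>s. (1 / s) *\<^sub>R (grad f (x + s *\<^sub>R (Pi *v w)) - grad f x) \<bullet>
              (1 / s) *\<^sub>R (grad \<phi> (x + s *\<^sub>R (Pi *v w)) - grad \<phi> x)) \<longlongrightarrow> J w \<bullet> w) (at_right 0)"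
      by (intro tendsto_inner lims)
    show "((\<lambda>s. m * (norm ((1 / s) *\<^sub>R (grad \<phi> (x + s *\<^sub>R (Pi *v w)) - grad \<phi> x)))\<^sup>2) \<longlongrightarrow> m * (norm w)\<^sup>2) (at_right 0)"
      by (intro tendsto_intros lims)
    show "\<forall>\<^sub>F s in at_right 0. m * (norm ((1 / s) *\<^sub>R (grad \<phi> (x + s *\<^sub>R (Pi *v w)) - grad \<phi> x)))\<^sup>2
        \<le> (1 / s) *\<^sub>R (grad f (x + s *\<^sub>R (Pi *v w)) - grad f x) \<bullet>
              (1 / s) *\<^sub>R (grad \<phi> (x + s *\<^sub>R (Pi *v w)) - grad \<phi> x)"
      using eventually_line_in[OF X x, of "Pi *v w"]
    proof eventually_elim
      case (elim s)
      show ?case by (rule scale_ineq[OF A3(2)[OF elim x]])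
    qed
  qed
  have hc: "norm (J w) \<le> M * norm w" for w
  proof (rule tendsto_le[OF trivial_limit_at_right_real])
    show "((\<lambda>s. norm ((1 / s) *\<^sub>R (grad f (x + s *\<^sub>R (Pi *v w)) - grad f x))) \<longlongrightarrow> norm (J w)) (at_right 0)"
      by (intro tendsto_intros lims)
    show "((\<lambda>s. M * norm ((1 / s) *\<^sub>R (grad \<phi> (x + s *\<^sub>R (Pi *v w)) - grad \<phi> x))) \<longlongrightarrow> M * norm w) (at_right 0)"
      by (intro tendsto_intros lims)
    show "\<forall>\<^sub>F s in at_right 0. norm ((1 / s) *\<^sub>R (grad f (x + s *\<^sub>R (Pi *v w)) - grad f x))
        \<le> M * norm ((1 / s) *\<^sub>R (grad \<phi> (x + s *\<^sub>R (Pi *v w)) - grad \<phi> x))"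
      using eventually_line_in[OF X x, of "Pi *v w"]
    proof eventually_elim
      case (elim s)
      show ?case by (rule scale_ineq2[OF A4(2)[OF elim x]])
    qed
  qed
  have "(m + M) * (J v \<bullet> v) - (norm (J v))\<^sup>2 - (m * M - M * \<delta> - \<delta>\<^sup>2 / 4) * (norm v)\<^sup>2 \<ge> 0"
    by (rule key_alg[OF linJ linJT adj hb hc hd A3(1) A4(1) A5(1)])
  then show ?thesis unfolding J_def Hf_def Pi_def Hp_def .
qed

lemma line_deriv_vec:
  fixes F :: "'a::real_normed_vector \<Rightarrow> 'b::real_inner"
  assumes "(F has_derivative F') (at (p + t *\<^sub>R q))"
  shows "((\<lambda>t. a \<bullet> F (p + t *\<^sub>R q)) has_real_derivative (a \<bullet> F' q)) (at t)"
proof -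
  interpret F': bounded_linear F' using has_derivative_bounded_linear[OF assms] .
  have "((\<lambda>t. p + t *\<^sub>R q) has_derivative (\<lambda>h. h *\<^sub>R q)) (at t)"
    by (auto intro!: derivative_eq_intros)
  from has_derivative_compose[OF this assms]
  have "((\<lambda>t. F (p + t *\<^sub>R q)) has_derivative (\<lambda>h. F' (h *\<^sub>R q))) (at t)" .
  from has_derivative_inner_right[OF this, of a]
  have "((\<lambda>t. a \<bullet> F (p + t *\<^sub>R q)) has_derivative (\<lambda>h. a \<bullet> F' (h *\<^sub>R q))) (at t)" .
  moreover have "(\<lambda>h. a \<bullet> F' (h *\<^sub>R q)) = (*) (a \<bullet> F' q)" by (auto simp: fun_eq_iff F'.scaleR)
  ultimately show ?thesis by (simp add: has_field_derivative_def)
qed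

lemma norm_sq_convex:
  fixes a b :: "'a::real_inner"
  assumes "0 \<le> \<alpha>" "0 \<le> \<beta>" "\<alpha> + \<beta> = 1"
  shows "(norm (\<alpha> *\<^sub>R a + \<beta> *\<^sub>R b))\<^sup>2 \<le> \<alpha> * (norm a)\<^sup>2 + \<beta> * (norm b)\<^sup>2"
proof -
  have b: "\<beta> = 1 - \<alpha>" using assms by simp
  have "\<alpha> * (norm a)\<^sup>2 + \<beta> * (norm b)\<^sup>2 - (norm (\<alpha> *\<^sub>R a + \<beta> *\<^sub>R b))\<^sup>2 = \<alpha> * \<beta> * (norm (a - b))\<^sup>2"
    unfolding power2_norm_eq_inner b
    by (simp add: inner_add_left inner_add_right inner_diff_left inner_diff_right inner_commute[of b a] algebra_simps power2_eq_square)
  moreover have "\<alpha> * \<beta> * (norm (a - b))\<^sup>2 \<ge> 0" using assms by simp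
  ultimately show ?thesis by linarith
qed

theorem proposition2:
  fixes X :: "(real^'n) set" and f \<phi> :: "real^'n \<Rightarrow> real"
    and m M \<delta> :: real
  assumes X_open: "open X" and X_contr: "contractible X"
    and f_C3: "C3_on X f" and phi_C3: "C3_on X \<phi>"
    and phi_leg: "legendre_type X \<phi>"
    and A3: "m \<ge> 0"
      "\<And>x x'. x \<in> X \<Longrightarrow> x' \<in> X \<Longrightarrow>
         m * (norm (grad \<phi> x - grad \<phi> x'))\<^sup>2
           \<le> (grad f x - grad f x') \<bullet> (grad \<phi> x - grad \<phi> x')"
    and A4: "M > 0"
      "\<And>x x'. x \<in> X \<Longrightarrow> x' \<in> X \<Longrightarrow>
         norm (grad f x - grad f x') \<le> M * norm (grad \<phi> x - grad \<phi> x')"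
    and A5: "\<delta> \<ge> 0"
      "\<And>x. x \<in> X \<Longrightarrow> invertible (hessian \<phi> x)"
      "\<And>x. x \<in> X \<Longrightarrow>
         spec_norm (commutator (matrix_inv (hessian \<phi> x)) (hessian f x)) \<le> \<delta>"
  shows "\<forall>x1\<in>X. \<forall>x2\<in>X.
     (grad f x1 - grad f x2) \<bullet> (grad \<phi> x1 - grad \<phi> x2)
       \<ge> (1 / (m + M)) * (norm (grad f x1 - grad f x2))\<^sup>2
         + ((4*m*M - 4*M*\<delta> - \<delta>\<^sup>2) / (4*(m + M))) * (norm (grad \<phi> x1 - grad \<phi> x2))\<^sup>2"
proof (intro ballI)
  fix x1 x2 assume x1: "x1 \<in> X" and x2: "x2 \<in> X"
  have df: "\<And>z. z \<in> X \<Longrightarrow> f differentiable (at z)"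
    and dgf: "\<And>z. z \<in> X \<Longrightarrow> grad f differentiable (at z)"
    using f_C3 unfolding C3_on_def by auto
  have dp: "\<And>z. z \<in> X \<Longrightarrow> \<phi> differentiable (at z)"
    and dgp: "\<And>z. z \<in> X \<Longrightarrow> grad \<phi> differentiable (at z)"
    using phi_C3 unfolding C3_on_def by auto
  have cX: "convex X" and cvx: "convex_on X \<phi>" and scvx: "strictly_convex_on X \<phi>"
    and blow: "\<And>s z. (\<forall>k. s k \<in> X) \<Longrightarrow> s \<longlonglongrightarrow> z \<Longrightarrow> z \<in> frontier X \<Longrightarrow>
        filterlim (\<lambda>k. norm (grad \<phi> (s k))) at_top sequentially"
    using phi_leg unfolding legendre_type_def by auto
  define Y where "Y = grad \<phi> ` X"
  have cY: "convex Y" unfolding Y_def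
  proof (rule convexI)
    fix a b and u v :: real assume a: "a \<in> grad \<phi> ` X" and b: "b \<in> grad \<phi> ` X"
      and uv: "0 \<le> u" "0 \<le> v" "u + v = 1"
    obtain xa where xa: "xa \<in> X" "a = grad \<phi> xa" using a by auto
    obtain xb where xb: "xb \<in> X" "b = grad \<phi> xb" using b by auto
    show "u *\<^sub>R a + v *\<^sub>R b \<in> grad \<phi> ` X"
    proof (cases "v = 0")
      case True then show ?thesis using uv a by simp
    next
      case False
      show ?thesis
      proof (cases "v = 1")
        case True then show ?thesis using uv b by simp
      next
        case False
        then have v01: "0 < v" "v < 1" using \<open>v \<noteq> 0\<close> uv by auto
        have "\<exists>z\<in>X. grad \<phi> z = (1 - v) *\<^sub>R grad \<phi> xa + v *\<^sub>R grad \<phi> xb"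
        proof (rule grad_image_comb[OF X_open cX cvx scvx dp _ xa(1) xb(1) v01])
          fix s z assume "\<forall>k. s k \<in> X" "s \<longlonglongrightarrow> z" "z \<in> frontier X"
          then show "filterlim (\<lambda>k. norm (grad \<phi> (s k))) at_top sequentially" by (rule blow)
        qed
        then obtain z where "z \<in> X" "grad \<phi> z = (1 - v) *\<^sub>R a + v *\<^sub>R b" using xa xb by blast
        moreover have "1 - v = u" using uv by simp
        ultimately show ?thesis by force
      qed
    qed
  qed
  have inj: "inj_on (grad \<phi>) X" by (rule grad_inj[OF X_open cvx scvx dp])
  define ginv where "ginv = inv_into X (grad \<phi>)"
  have ginv1: "ginv (grad \<phi> z) = z" if "z \<in> X" for z using inj that by (simp add: ginv_def)
  have ginv2: "ginv y \<in> X" "grad \<phi> (ginv y) = y" if "y \<in> Y" for y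
    using that unfolding Y_def ginv_def by (auto intro: inv_into_into f_inv_into_f)
  have contgp: "continuous_on X (grad \<phi>)"
    using dgp by (meson continuous_at_imp_continuous_on differentiable_imp_continuous_within)
  define J where "J = (\<lambda>z w. hessian f z *v (matrix_inv (hessian \<phi> z) *v w))"
  have psider: "((\<lambda>y. grad f (ginv y)) has_derivative J z) (at (grad \<phi> z))" if z: "z \<in> X" for z
  proof -
    have id: "(\<lambda>h. hessian \<phi> z *v h) \<circ> (\<lambda>w. matrix_inv (hessian \<phi> z) *v w) = id"
      using matrix_inv_both(1)[OF A5(2)[OF z]] by (auto simp: fun_eq_iff matrix_vector_mul_assoc)
    have gd: "(ginv has_derivative (\<lambda>w. matrix_inv (hessian \<phi> z) *v w)) (at (grad \<phi> z))"
      by (rule has_derivative_inverse_strong[OF X_open z contgp ginv1 hess_deriv[OF dgp[OF z]] id])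
    have "(grad f has_derivative (\<lambda>h. hessian f z *v h)) (at (ginv (grad \<phi> z)))"
      using hess_deriv[OF dgf[OF z]] ginv1[OF z] by simp
    from has_derivative_compose[OF gd this] show ?thesis unfolding J_def .
  qed
  define v where "v = grad \<phi> x1 - grad \<phi> x2"
  define u where "u = grad f x1 - grad f x2"
  define C where "C = m * M - M * \<delta> - \<delta>\<^sup>2 / 4"
  define K where "K = {w. 0 \<le> (m + M) * (w \<bullet> v) - (norm w)\<^sup>2 - C * (norm v)\<^sup>2}"
  have JK: "J z v \<in> K" if "z \<in> X" for z
    using pointwise_key[OF X_open that df dgf dp dgp A3 A4 A5(1) A5(2)[OF that] A5(3)[OF that], of v]
    unfolding K_def J_def C_def by simp
  have cK: "convex K" unfolding K_def
  proof (rule convexI)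
    fix a b and \<alpha> \<beta> :: real assume a: "a \<in> {w. 0 \<le> (m + M) * (w \<bullet> v) - (norm w)\<^sup>2 - C * (norm v)\<^sup>2}"
      and b: "b \<in> {w. 0 \<le> (m + M) * (w \<bullet> v) - (norm w)\<^sup>2 - C * (norm v)\<^sup>2}"
      and ab: "0 \<le> \<alpha>" "0 \<le> \<beta>" "\<alpha> + \<beta> = 1"
    have n: "(norm (\<alpha> *\<^sub>R a + \<beta> *\<^sub>R b))\<^sup>2 \<le> \<alpha> * (norm a)\<^sup>2 + \<beta> * (norm b)\<^sup>2"
      by (rule norm_sq_convex[OF ab])
    have qa: "0 \<le> \<alpha> * ((m + M) * (a \<bullet> v) - (norm a)\<^sup>2 - C * (norm v)\<^sup>2)" using a ab by simp
    have qb: "0 \<le> \<beta> * ((m + M) * (b \<bullet> v) - (norm b)\<^sup>2 - C * (norm v)\<^sup>2)" using b ab by simp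
    have "(m + M) * ((\<alpha> *\<^sub>R a + \<beta> *\<^sub>R b) \<bullet> v) - C * (norm v)\<^sup>2
        = \<alpha> * ((m + M) * (a \<bullet> v) - C * (norm v)\<^sup>2) + \<beta> * ((m + M) * (b \<bullet> v) - C * (norm v)\<^sup>2)"
      using ab(3) by (simp add: inner_add_left algebra_simps) (metis add.commute distrib_left mult.commute mult_1)
    then show "\<alpha> *\<^sub>R a + \<beta> *\<^sub>R b \<in> {w. 0 \<le> (m + M) * (w \<bullet> v) - (norm w)\<^sup>2 - C * (norm v)\<^sup>2}"
      using n qa qb by (simp add: algebra_simps)
  qed
  have clK: "closed K" unfolding K_def
    by (rule closed_Collect_le) (intro continuous_intros)+
  have uK: "u \<in> K"
  proof (rule ccontr)
    assume "u \<notin> K"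
    from separating_hyperplane_closed_point[OF cK clK this]
    obtain a b where ab: "a \<bullet> u < b" "\<And>w. w \<in> K \<Longrightarrow> b < a \<bullet> w" by blast
    define h where "h = (\<lambda>t. a \<bullet> grad f (ginv (grad \<phi> x2 + t *\<^sub>R v)))"
    have yt: "grad \<phi> x2 + t *\<^sub>R v \<in> Y" if "0 \<le> t" "t \<le> 1" for t
    proof -
      have "(1 - t) *\<^sub>R grad \<phi> x2 + t *\<^sub>R grad \<phi> x1 \<in> Y"
        using convexD[OF cY, of "grad \<phi> x2" "grad \<phi> x1" "1 - t" t] that x1 x2 by (auto simp: Y_def)
      moreover have "(1 - t) *\<^sub>R grad \<phi> x2 + t *\<^sub>R grad \<phi> x1 = grad \<phi> x2 + t *\<^sub>R v"
        by (simp add: v_def algebra_simps)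
      ultimately show ?thesis by simp
    qed
    have hder: "(h has_real_derivative (a \<bullet> J (ginv (grad \<phi> x2 + t *\<^sub>R v)) v)) (at t)"
      if "0 \<le> t" "t \<le> 1" for t
    proof -
      let ?z = "ginv (grad \<phi> x2 + t *\<^sub>R v)"
      have z: "?z \<in> X" "grad \<phi> ?z = grad \<phi> x2 + t *\<^sub>R v" using ginv2 yt[OF that] by auto
      have "((\<lambda>y. grad f (ginv y)) has_derivative J ?z) (at (grad \<phi> x2 + t *\<^sub>R v))"
        using psider[OF z(1)] z(2) by simp
      from line_deriv_vec[OF this] show ?thesis unfolding h_def .
    qed
    obtain \<tau> where tau: "0 < \<tau>" "\<tau> < 1"
      "h 1 - h 0 = (1 - 0) * (a \<bullet> J (ginv (grad \<phi> x2 + \<tau> *\<^sub>R v)) v)"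
      using MVT2[OF zero_less_one hder] by blast
    have "ginv (grad \<phi> x2 + \<tau> *\<^sub>R v) \<in> X" using ginv2 yt tau by auto
    then have "b < a \<bullet> J (ginv (grad \<phi> x2 + \<tau> *\<^sub>R v)) v" using ab(2) JK by blast
    moreover have "h 1 - h 0 = a \<bullet> u"
    proof -
      have "grad \<phi> x2 + 1 *\<^sub>R v = grad \<phi> x1" by (simp add: v_def)
      then show ?thesis by (simp add: h_def u_def ginv1 x1 x2 inner_diff_right)
    qed
    ultimately show False using tau(3) ab(1) by simp
  qed
  then have Q: "(norm u)\<^sup>2 + C * (norm v)\<^sup>2 \<le> (m + M) * (u \<bullet> v)" by (simp add: K_def)
  have mM: "m + M > 0" using A3(1) A4(1) by simp
  have "(1 / (m + M)) * (norm u)\<^sup>2 + ((4*m*M - 4*M*\<delta> - \<delta>\<^sup>2) / (4*(m + M))) * (norm v)\<^sup>2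
      = ((norm u)\<^sup>2 + C * (norm v)\<^sup>2) / (m + M)"
  proof -
    have "(4*m*M - 4*M*\<delta> - \<delta>\<^sup>2) / (4*(m + M)) = C / (m + M)"
      unfolding C_def by (simp add: divide_simps)
    then show ?thesis by (simp add: add_divide_distrib)
  qed
  also have "\<dots> \<le> u \<bullet> v" using Q mM by (simp add: pos_divide_le_eq mult.commute)
  finally show "(grad f x1 - grad f x2) \<bullet> (grad \<phi> x1 - grad \<phi> x2)
       \<ge> (1 / (m + M)) * (norm (grad f x1 - grad f x2))\<^sup>2
         + ((4*m*M - 4*M*\<delta> - \<delta>\<^sup>2) / (4*(m + M))) * (norm (grad \<phi> x1 - grad \<phi> x2))\<^sup>2"
    by (simp add: u_def v_def)
qed

end
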